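(* Let $\{c_n\}_{n\ge0}$ be a real sequence with $\{c_n\}\in NBVS$, and suppose $f(x)=\sum_{n=0}^\infty c_n\cos nx$ converges for every $x$ and $f\in C_{2\pi}$. Let $S_n(f,x)=\sum_{k=0}^nc_k\cos kx$. If $$\sum_{k=n+1}^{2n}c_k=O\Big(\max_{1\le k\le n}kc_{n+k}\Big)\quad(n\to\infty),$$ then $\|f-S_n(f)\|=O(E_n(f))$.
   Context: For $\theta_0\in[0,\pi/2)$ let $M(\theta_0)=\{z\in\mathbb C: |\arg z|\le\theta_0\}$ (with $0\in M(\theta_0)$). Write $\Delta c_n=c_n-c_{n+1}$. A complex sequence $\mathbf C=\{c_n\}$ belongs to $NBVS$ if there is $\theta_0\in[0,\pi/2)$ with $c_n\in M(\theta_0)$ for all $n\ge1$ and a constant $K(\mathbf C)>0$ such that $\sum_{n=m}^{2m}|\Delta c_n|\le K(\mathbf C)\big(|c_m|+|c_{2m}|\big)$ for all $m\ge1$ (so a real sequence in $NBVS$ is nonnegative for $n\ge1$). $C_{2\pi}$ is the space of continuous $2\pi$-periodic functions with $\|g\|=\max_x|g(x)|$; $E_n(f)$ is the best uniform approximation of $f$ by trigonometric polynomials of degree at most $n$. *)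

theory Defs
  imports "HOL-Analysis.Analysis" "HOL-Library.Landau_Symbols"
begin

definition sector :: "real \<Rightarrow> complex set" where
  "sector \<theta>0 = {z. z = 0 \<or> \<bar>Arg z\<bar> \<le> \<theta>0}"

definition NBVS :: "(nat \<Rightarrow> complex) \<Rightarrow> bool" where
  "NBVS c \<longleftrightarrow>
     (\<exists>\<theta>0. 0 \<le> \<theta>0 \<and> \<theta>0 < pi / 2 \<and> (\<forall>n\<ge>1. c n \<in> sector \<theta>0)) \<and>
     (\<exists>K>0. \<forall>m\<ge>1. (\<Sum>n=m..2*m. norm (c n - c (Suc n))) \<le> K * (norm (c m) + norm (c (2*m))))"

definition sup_norm :: "(real \<Rightarrow> real) \<Rightarrow> real" where
  "sup_norm g = (SUP x. \<bar>g x\<bar>)"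

definition trig_poly :: "nat \<Rightarrow> (real \<Rightarrow> real) \<Rightarrow> bool" where
  "trig_poly n T \<longleftrightarrow> (\<exists>a b :: nat \<Rightarrow> real.
     \<forall>x. T x = a 0 + (\<Sum>k=1..n. a k * cos (real k * x) + b k * sin (real k * x)))"

definition best_approx :: "nat \<Rightarrow> (real \<Rightarrow> real) \<Rightarrow> real" where
  "best_approx n f = (INF T\<in>{T. trig_poly n T}. sup_norm (\<lambda>x. f x - T x))"

end

theory Submission
  imports Defs
begin


lemma cos_int_integral:
  fixes k :: int
  shows "((\<lambda>x. cos (of_int k * x)) has_integral (if k = 0 then 2*pi else 0)) {-pi..pi}"
proof (cases "k = 0")
  case True
  then show ?thesis using has_integral_const_real[of "1::real" "-pi" pi] by simp
next
  case False
  have "((\<lambda>x. cos (of_int k * x)) has_integral ((\<lambda>x. sin (of_int k * x) / of_int k) pi - (\<lambda>x. sin (of_int k * x) / of_int k) (-pi))) {-pi..pi}"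
  proof (rule fundamental_theorem_of_calculus)
    show "-pi \<le> pi" by simp
    fix x :: real
    show "((\<lambda>x. sin (of_int k * x) / of_int k) has_vector_derivative cos (of_int k * x)) (at x within {-pi..pi})"
      using False
      by (auto intro!: derivative_eq_intros simp: has_real_derivative_iff_has_vector_derivative[symmetric])
  qed
  moreover have "sin (of_int k * pi) = 0" using sin_npi_int[of k] by (simp add: mult.commute)
  moreover have "sin (of_int k * - pi) = 0" using sin_npi_int[of "-k"] by (simp add: mult.commute)
  ultimately show ?thesis using False by simp
qed

lemma odd_integral_zero:
  fixes g :: "real \<Rightarrow> real"
  assumes "\<And>x. g (-x) = - g x"
  shows "integral {-pi..pi} g = 0"
proof -
  have "integral {-pi..pi} g = integral {- pi..- (-pi)} (\<lambda>x. g (-x))"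
    using Henstock_Kurzweil_Integration.integral_reflect_real[of pi "-pi" g] by simp
  also have "\<dots> = - integral {-pi..pi} g" using assms by (simp add: integral_neg)
  finally show ?thesis by simp
qed

definition Dk :: "nat \<Rightarrow> real \<Rightarrow> real" where
  "Dk j x = 1 + 2 * (\<Sum>d=1..j. cos (real d * x))"

lemma Dk_cont: "continuous_on S (Dk j)"
  unfolding Dk_def by (intro continuous_intros)

lemma Dk_even: "Dk j (-x) = Dk j x"
  unfolding Dk_def by simp

lemma Dk_integral:
  fixes k :: int
  shows "((\<lambda>x. cos (of_int k * x) * Dk j x) has_integral (if \<bar>k\<bar> \<le> int j then 2*pi else 0)) {-pi..pi}"
proof -
  have eq: "(\<lambda>x. cos (of_int k * x) * Dk j x) = (\<lambda>x. cos (of_int k * x) +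
     (\<Sum>d\<in>{1..j}. cos (of_int (k - int d) * x) + cos (of_int (k + int d) * x)))"
    apply (rule ext) apply (simp add: Dk_def algebra_simps sum_distrib_left sum_distrib_right cos_times_cos sum.distrib)
    by (simp add: sum.distrib[symmetric] add_divide_distrib)
  have "((\<lambda>x. cos (of_int k * x) +
     (\<Sum>d\<in>{1..j}. cos (of_int (k - int d) * x) + cos (of_int (k + int d) * x))) has_integral
     ((if k = 0 then 2*pi else 0) + (\<Sum>d\<in>{1..j}. (if k - int d = 0 then 2*pi else 0) + (if k + int d = 0 then 2*pi else 0)))) {-pi..pi}"
    by (intro has_integral_add has_integral_sum cos_int_integral) auto
  moreover have "(\<Sum>d\<in>{1..j}. (if k - int d = 0 then 2*pi else 0) + (if k + int d = 0 then 2*pi else 0))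
      = (if 1 \<le> \<bar>k\<bar> \<and> \<bar>k\<bar> \<le> int j then 2*pi else 0)"
  proof -
    have "(\<Sum>d\<in>{1..j}. (if k - int d = 0 then 2*pi else 0) + (if k + int d = 0 then 2*pi else 0))
        = (\<Sum>d\<in>{1..j}. if d = nat \<bar>k\<bar> then (if k = 0 then 0 else 2*pi) else 0)"
      by (rule sum.cong) auto
    also have "\<dots> = (if 1 \<le> \<bar>k\<bar> \<and> \<bar>k\<bar> \<le> int j then 2*pi else 0)"
      by (subst sum.delta) auto
    finally show ?thesis .
  qed
  ultimately show ?thesis unfolding eq by (auto split: if_splits)
qed

definition Gk :: "nat \<Rightarrow> real \<Rightarrow> real" where
  "Gk L x = (\<Sum>j<L. Dk j x)"

lemma Gk_cont: "continuous_on S (Gk L)"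
  unfolding Gk_def by (intro continuous_intros Dk_cont)

lemma Gk_even: "Gk L (-x) = Gk L x"
  unfolding Gk_def by (simp add: Dk_even)

lemma sum_if_card: "(\<Sum>j<L. if m \<le> j then a else 0) = a * real (L - m)"
proof -
  have "(\<Sum>j<L. if m \<le> j then a else 0) = (\<Sum>j\<in>{..<L} \<inter> {j. m \<le> j}. a)"
    by (subst sum.inter_restrict) auto
  also have "{..<L} \<inter> {j. m \<le> j} = {m..<L}" by auto
  finally show ?thesis by simp
qed

lemma Gk_integral:
  fixes k :: int
  shows "((\<lambda>x. cos (of_int k * x) * Gk L x) has_integral (2*pi*real (L - nat \<bar>k\<bar>))) {-pi..pi}"
proof -
  have "((\<lambda>x. \<Sum>j<L. cos (of_int k * x) * Dk j x) has_integral (\<Sum>j<L. if nat \<bar>k\<bar> \<le> j then 2*pi else 0)) {-pi..pi}"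
  proof (intro has_integral_sum)
    fix j assume "j \<in> {..<L}"
    show "((\<lambda>x. cos (of_int k * x) * Dk j x) has_integral (if nat \<bar>k\<bar> \<le> j then 2*pi else 0)) {-pi..pi}"
      using Dk_integral[of k j] by (smt (verit, best) has_integral_cong int_nat_eq nat_le_iff)
  qed auto
  then show ?thesis by (simp add: sum_if_card Gk_def sum_distrib_left mult.commute)
qed

lemma Dk_suc: "Dk (Suc j) x = Dk j x + 2 * cos (real (Suc j) * x)"
  unfolding Dk_def by (simp add: algebra_simps)

lemma Dk_tele: "(1 - cos x) * Dk j x = cos (real j * x) - cos (real (Suc j) * x)"
proof (induction j)
  case 0
  then show ?case by (simp add: Dk_def)
next
  case (Suc j)
  have a: "cos (real (Suc (Suc j)) * x) = cos (real (Suc j) * x + x)"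
    by (simp add: algebra_simps)
  have b: "cos (real j * x) = cos (real (Suc j) * x - x)"
    by (simp add: algebra_simps)
  have "(1 - cos x) * Dk (Suc j) x = cos (real j * x) - cos (real (Suc j) * x) + (1 - cos x) * 2 * cos (real (Suc j) * x)"
    using Suc by (simp add: Dk_suc algebra_simps)
  also have "\<dots> = cos (real (Suc j) * x) - cos (real (Suc (Suc j)) * x)"
    unfolding a b cos_add cos_diff by (simp add: algebra_simps)
  finally show ?case .
qed

lemma Gk_tele: "(1 - cos x) * Gk L x = 1 - cos (real L * x)"
proof -
  have "(1 - cos x) * Gk L x = (\<Sum>j<L. cos (real j * x) - cos (real (Suc j) * x))"
    unfolding Gk_def sum_distrib_left Dk_tele ..
  also have "\<dots> = 1 - cos (real L * x)"
    using sum_lessThan_telescope'[of "\<lambda>j. cos (real j * x)" L] by simp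
  finally show ?thesis .
qed

lemma Gk_nonneg: "0 \<le> Gk L x"
proof (cases "cos x = 1")
  case True
  then obtain n :: int where n: "x = of_int n * 2 * pi" using cos_one_2pi_int by blast
  have "Dk j x \<ge> 0" for j
  proof -
    have "cos (real d * x) = 1" for d
    proof -
      have "real d * x = 2 * pi * of_int (int d * n)" using n by simp
      then show ?thesis by (metis cos_int_2pin)
    qed
    then show ?thesis unfolding Dk_def by simp
  qed
  then show ?thesis unfolding Gk_def by (simp add: sum_nonneg)
next
  case False
  then have "1 - cos x > 0" using cos_le_one[of x] by linarith
  moreover have "(1 - cos x) * Gk L x \<ge> 0" using Gk_tele cos_le_one by simp
  ultimately show ?thesis by (simp add: zero_le_mult_iff)
qed

lemma cos_swap: "cos (a - b) = cos (b - a)"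
  by (metis cos_minus minus_diff_eq)

lemma window_integral:
  fixes m N :: nat
  shows "((\<lambda>x. cos (real m * x) * (cos (real N * x) * Gk L x)) has_integral
     (pi * (real (L - nat \<bar>int m - int N\<bar>) + real (L - (m + N))))) {-pi..pi}"
proof -
  have eq: "(\<lambda>x. cos (real m * x) * (cos (real N * x) * Gk L x)) =
    (\<lambda>x. (1/2) * (cos (of_int (int m - int N) * x) * Gk L x) + (1/2) * (cos (of_int (int m + int N) * x) * Gk L x))"
    by (rule ext) (simp add: cos_times_cos algebra_simps add_divide_distrib cos_swap)
  have "((\<lambda>x. (1/2) * (cos (of_int (int m - int N) * x) * Gk L x) + (1/2) * (cos (of_int (int m + int N) * x) * Gk L x))
     has_integral ((1/2) * (2*pi*real (L - nat \<bar>int m - int N\<bar>)) + (1/2) * (2*pi*real (L - nat \<bar>int m + int N\<bar>)))) {-pi..pi}"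
    by (intro has_integral_add has_integral_mult_right Gk_integral)
  moreover have "nat \<bar>int m + int N\<bar> = m + N" by simp
  ultimately show ?thesis unfolding eq by (simp add: algebra_simps)
qed

lemma pairing_sums:
  fixes c :: "nat \<Rightarrow> real" and f K :: "real \<Rightarrow> real"
  assumes summ: "summable (\<lambda>m. \<bar>c m\<bar>)"
    and sums: "\<forall>x. (\<lambda>m. c m * cos (real m * x)) sums f x"
    and Kc: "continuous_on {-pi..pi} K"
  shows "(\<lambda>m. c m * integral {-pi..pi} (\<lambda>x. cos (real m * x) * K x)) sums integral {-pi..pi} (\<lambda>x. f x * K x)"
proof -
  have "compact (K ` {-pi..pi})" by (intro compact_continuous_image Kc) auto
  then obtain B where B: "\<forall>y\<in>K ` {-pi..pi}. norm y \<le> B"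
    using compact_imp_bounded bounded_iff by metis
  define g where "g = (\<lambda>m x. c m * cos (real m * x) * K x)"
  have gb: "norm (g m x) \<le> \<bar>c m\<bar> * B" if "x \<in> {-pi..pi}" for m x
  proof -
    have "\<bar>K x\<bar> \<le> B" using B that by auto
    moreover have "\<bar>cos (real m * x)\<bar> \<le> 1" by simp
    ultimately have "\<bar>cos (real m * x) * K x\<bar> \<le> 1 * B"
      by (metis abs_ge_zero abs_mult mult_mono')
    then show ?thesis unfolding g_def by (simp add: abs_mult mult.assoc mult_left_mono)
  qed
  have "uniform_limit {-pi..pi} (\<lambda>n x. \<Sum>i<n. g i x) (\<lambda>x. suminf (\<lambda>i. g i x)) sequentially"
    by (rule Weierstrass_m_test[OF gb]) (auto intro: summable_mult2 summ)
  moreover have "(\<lambda>x. suminf (\<lambda>i. g i x)) = (\<lambda>x. f x * K x)"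
  proof
    fix x
    have "(\<lambda>i. c i * cos (real i * x) * K x) sums (f x * K x)"
      using sums by (intro sums_mult2) auto
    then show "suminf (\<lambda>i. g i x) = f x * K x" unfolding g_def by (rule sums_unique[symmetric])
  qed
  ultimately have u: "uniform_limit {-pi..pi} (\<lambda>n x. \<Sum>i<n. g i x) (\<lambda>x. f x * K x) sequentially"
    by simp
  have ci: "(\<lambda>x. cos (real m * x) * K x) integrable_on {-pi..pi}" for m
    by (intro integrable_continuous_interval continuous_intros Kc)
  obtain I J where I: "\<And>n. ((\<lambda>x. \<Sum>i<n. g i x) has_integral I n) {-pi..pi}"
    and J: "((\<lambda>x. f x * K x) has_integral J) {-pi..pi}" and IJ: "I \<longlonglongrightarrow> J"
    by (rule uniform_limit_integral[OF u]) (auto simp: g_def intro!: continuous_intros Kc)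
  have "I n = (\<Sum>i<n. c i * integral {-pi..pi} (\<lambda>x. cos (real i * x) * K x))" for n
  proof -
    have "((\<lambda>x. \<Sum>i<n. g i x) has_integral (\<Sum>i<n. c i * integral {-pi..pi} (\<lambda>x. cos (real i * x) * K x))) {-pi..pi}"
      unfolding g_def mult.assoc
      by (intro has_integral_sum has_integral_mult_right integrable_integral ci) auto
    then show ?thesis using I[of n] by (rule has_integral_unique[symmetric])
  qed
  then have "I = (\<lambda>n. \<Sum>i<n. c i * integral {-pi..pi} (\<lambda>x. cos (real i * x) * K x))" by (rule ext)
  then show ?thesis using IJ J unfolding sums_def by (simp add: integral_unique)
qed

lemma T_pairing:
  fixes K :: "real \<Rightarrow> real" and a b :: "nat \<Rightarrow> real"
  assumes Kc: "continuous_on {-pi..pi} K" and Ke: "\<And>x. K (-x) = K x"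
  shows "((\<lambda>x. (a 0 + (\<Sum>k=1..n. a k * cos (real k * x) + b k * sin (real k * x))) * K x) has_integral
     (a 0 * integral {-pi..pi} K + (\<Sum>k=1..n. a k * integral {-pi..pi} (\<lambda>x. cos (real k * x) * K x)))) {-pi..pi}"
proof -
  have eq: "(\<lambda>x. (a 0 + (\<Sum>k=1..n. a k * cos (real k * x) + b k * sin (real k * x))) * K x) =
    (\<lambda>x. a 0 * K x + (\<Sum>k=1..n. a k * (cos (real k * x) * K x) + b k * (sin (real k * x) * K x)))"
    by (rule ext) (simp add: algebra_simps sum_distrib_left sum_distrib_right)
  have si: "((\<lambda>x. sin (real k * x) * K x) has_integral 0) {-pi..pi}" for k
  proof -
    have "(\<lambda>x. sin (real k * x) * K x) integrable_on {-pi..pi}"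
      by (intro integrable_continuous_interval continuous_intros Kc)
    moreover have "integral {-pi..pi} (\<lambda>x. sin (real k * x) * K x) = 0"
      by (rule odd_integral_zero) (simp add: Ke)
    ultimately show ?thesis using integrable_integral by fastforce
  qed
  have ci: "(\<lambda>x. cos (real k * x) * K x) integrable_on {-pi..pi}" for k
    by (intro integrable_continuous_interval continuous_intros Kc)
  have "((\<lambda>x. a 0 * K x + (\<Sum>k=1..n. a k * (cos (real k * x) * K x) + b k * (sin (real k * x) * K x))) has_integral
     (a 0 * integral {-pi..pi} K + (\<Sum>k=1..n. a k * integral {-pi..pi} (\<lambda>x. cos (real k * x) * K x) + b k * 0))) {-pi..pi}"
    by (intro has_integral_add has_integral_mult_right has_integral_sum integrable_integral
        integrable_continuous_interval Kc ci si) auto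
  then show ?thesis unfolding eq by simp
qed

lemma h_bound:
  fixes h K P :: "real \<Rightarrow> real"
  assumes "continuous_on {-pi..pi} h" "continuous_on {-pi..pi} K" "continuous_on {-pi..pi} P"
    and "\<And>x. \<bar>h x\<bar> \<le> s" and "\<And>x. \<bar>K x\<bar> \<le> P x"
  shows "\<bar>integral {-pi..pi} (\<lambda>x. h x * K x)\<bar> \<le> s * integral {-pi..pi} P"
proof -
  have "norm (integral {-pi..pi} (\<lambda>x. h x * K x)) \<le> integral {-pi..pi} (\<lambda>x. s * P x)"
  proof (rule integral_norm_bound_integral)
    show "(\<lambda>x. h x * K x) integrable_on {-pi..pi}"
      by (intro integrable_continuous_interval continuous_intros assms)
    show "(\<lambda>x. s * P x) integrable_on {-pi..pi}"
      by (intro integrable_continuous_interval continuous_intros assms)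
    fix x
    show "norm (h x * K x) \<le> s * P x"
      using assms(4,5)[of x] by (simp add: abs_mult mult_mono')
  qed
  then show ?thesis by simp
qed

lemma Gk_int0: "integral {-pi..pi} (Gk L) = 2*pi*real L"
  using Gk_integral[of 0 L] by (simp add: integral_unique)

context
  fixes c :: "nat \<Rightarrow> real" and f T :: "real \<Rightarrow> real" and a b :: "nat \<Rightarrow> real" and n :: nat and s :: real
  assumes cnn: "\<And>m. 1 \<le> m \<Longrightarrow> 0 \<le> c m"
    and summ: "summable (\<lambda>m. \<bar>c m\<bar>)"
    and sums: "\<forall>x. (\<lambda>m. c m * cos (real m * x)) sums f x"
    and fc: "continuous_on UNIV f"
    and Tdef: "\<And>x. T x = a 0 + (\<Sum>k=1..n. a k * cos (real k * x) + b k * sin (real k * x))"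
    and sb: "\<And>x. \<bar>f x - T x\<bar> \<le> s"
begin

lemma Teq: "T = (\<lambda>x. a 0 + (\<Sum>k=1..n. a k * cos (real k * x) + b k * sin (real k * x)))"
  using Tdef by (rule ext)

lemma Tc: "continuous_on S T"
  unfolding Teq by (intro continuous_intros)

lemma fc': "continuous_on S f"
  using fc continuous_on_subset by blast

lemma pair_h:
  assumes Kc: "continuous_on {-pi..pi} K" and Ke: "\<And>x. K (-x) = K x"
  shows "integral {-pi..pi} (\<lambda>x. (f x - T x) * K x) = integral {-pi..pi} (\<lambda>x. f x * K x) -
     (a 0 * integral {-pi..pi} K + (\<Sum>k=1..n. a k * integral {-pi..pi} (\<lambda>x. cos (real k * x) * K x)))"
proof -
  have "((\<lambda>x. f x * K x - T x * K x) has_integral (integral {-pi..pi} (\<lambda>x. f x * K x) -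
     (a 0 * integral {-pi..pi} K + (\<Sum>k=1..n. a k * integral {-pi..pi} (\<lambda>x. cos (real k * x) * K x))))) {-pi..pi}"
    unfolding Teq
    by (intro has_integral_diff T_pairing Kc Ke integrable_integral integrable_continuous_interval
        continuous_intros fc')
  then show ?thesis by (simp add: integral_unique left_diff_distrib)
qed

lemma window:
  fixes l p :: nat
  assumes lp: "n + l + 1 \<le> p"
  shows "(\<Sum>m=p..p+2*l . c m) \<le> 4 * s"
proof -
  define N where "N = p + l"
  define L where "L = 2*l+1"
  define Kw where "Kw = (\<lambda>x. cos (real N * x) * Gk L x)"
  have NL: "L \<le> N" using lp unfolding N_def L_def by simp
  define \<phi> where "\<phi> = (\<lambda>m::nat. pi * real (L - nat \<bar>int m - int N\<bar>))"
  have phi: "integral {-pi..pi} (\<lambda>x. cos (real m * x) * Kw x) = \<phi> m" for m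
  proof -
    have "L - (m + N) = 0" using NL by simp
    then show ?thesis using window_integral[of m N L] unfolding Kw_def \<phi>_def
      by (simp add: integral_unique)
  qed
  have Kwc: "continuous_on {-pi..pi} Kw" unfolding Kw_def by (intro continuous_intros Gk_cont)
  have Kwe: "Kw (-x) = Kw x" for x unfolding Kw_def by (simp add: Gk_even)
  have S: "(\<lambda>m. c m * \<phi> m) sums integral {-pi..pi} (\<lambda>x. f x * Kw x)"
    using pairing_sums[OF summ sums Kwc] by (simp add: phi)
  have phi0: "\<phi> k = 0" if "k \<le> n" for k
  proof -
    have "nat \<bar>int k - int N\<bar> = N - k" using that lp unfolding N_def by arith
    moreover have "L \<le> N - k" using lp that unfolding N_def L_def by simp
    ultimately show ?thesis unfolding \<phi>_def by simp
  qed
  have iK: "integral {-pi..pi} Kw = \<phi> 0" using phi[of 0] by simp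
  have eqh: "integral {-pi..pi} (\<lambda>x. (f x - T x) * Kw x) = integral {-pi..pi} (\<lambda>x. f x * Kw x)"
    using pair_h[OF Kwc Kwe] by (simp add: phi phi0 iK)
  have ub: "\<bar>integral {-pi..pi} (\<lambda>x. (f x - T x) * Kw x)\<bar> \<le> s * integral {-pi..pi} (Gk L)"
  proof (rule h_bound)
    show "continuous_on {-pi..pi} (\<lambda>x. f x - T x)" by (intro continuous_intros fc' Tc)
    show "continuous_on {-pi..pi} Kw" by (rule Kwc)
    show "continuous_on {-pi..pi} (Gk L)" by (rule Gk_cont)
    show "\<bar>f x - T x\<bar> \<le> s" for x by (rule sb)
    show "\<bar>Kw x\<bar> \<le> Gk L x" for x
      unfolding Kw_def using Gk_nonneg[of L x] abs_cos_le_one[of "real N * x"]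
      by (simp add: abs_mult mult_left_le_one_le)
  qed
  have nonneg: "0 \<le> c m * \<phi> m" for m
  proof (cases "m = 0")
    case True then show ?thesis using phi0[of 0] by simp
  next
    case False then show ?thesis using cnn[of m] unfolding \<phi>_def by simp
  qed
  have "(\<Sum>m=p..p+2*l . c m * \<phi> m) \<le> suminf (\<lambda>m. c m * \<phi> m)"
    by (rule sum_le_suminf) (use S nonneg in \<open>auto simp: sums_iff\<close>)
  moreover have "(\<Sum>m=p..p+2*l . c m * (pi * real (l+1))) \<le> (\<Sum>m=p..p+2*l . c m * \<phi> m)"
  proof (rule sum_mono)
    fix m assume m: "m \<in> {p..p+2*l}"
    then have "l + 1 \<le> L - nat \<bar>int m - int N\<bar>" unfolding L_def N_def by auto
    then have "pi * real (l+1) \<le> \<phi> m" unfolding \<phi>_def by simp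
    moreover have "0 \<le> c m" using cnn[of m] m lp by simp
    ultimately show "c m * (pi * real (l+1)) \<le> c m * \<phi> m" by (simp add: mult_left_mono)
  qed
  ultimately have "(\<Sum>m=p..p+2*l . c m) * (pi * real (l+1)) \<le> s * (2*pi*real L)"
    using S ub eqh Gk_int0[of L] by (simp add: sums_iff sum_distrib_right)
  also have "\<dots> \<le> (4 * s) * (pi * real (l+1))"
  proof -
    have "0 \<le> s" using sb[of 0] by linarith
    then show ?thesis unfolding L_def by (simp add: algebra_simps mult_left_mono)
  qed
  finally show ?thesis by (simp add: mult_le_cancel_right pi_gt_zero)
qed

lemma tail_bound:
  shows "suminf (\<lambda>m. if 2*n+1 < m then c m else 0) \<le> 4 * s"
proof -
  define L where "L = n + 1"
  have L1: "1 \<le> L" unfolding L_def by simp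
  define V where "V = (\<lambda>x. (1 / real L) * (Gk (2*L) x - Gk L x))"
  define \<psi> where "\<psi> = (\<lambda>m::nat. (1 / real L) * (2*pi*real (2*L - m) - 2*pi*real (L - m)))"
  have psi: "integral {-pi..pi} (\<lambda>x. cos (real m * x) * V x) = \<psi> m" for m
  proof -
    have "((\<lambda>x. (1 / real L) * (cos (of_int (int m) * x) * Gk (2*L) x - cos (of_int (int m) * x) * Gk L x))
      has_integral \<psi> m) {-pi..pi}"
      unfolding \<psi>_def
      using has_integral_mult_right[OF has_integral_diff[OF Gk_integral[of "int m" "2*L"] Gk_integral[of "int m" L]], of "1 / real L"]
      by simp
    moreover have "(\<lambda>x. (1 / real L) * (cos (of_int (int m) * x) * Gk (2*L) x - cos (of_int (int m) * x) * Gk L x))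
       = (\<lambda>x. cos (real m * x) * V x)"
      unfolding V_def by (rule ext) (simp add: algebra_simps)
    ultimately show ?thesis by (simp add: integral_unique)
  qed
  have Vc: "continuous_on {-pi..pi} V" unfolding V_def by (intro continuous_intros Gk_cont)
  have Ve: "V (-x) = V x" for x unfolding V_def by (simp add: Gk_even)
  have S: "(\<lambda>m. c m * \<psi> m) sums integral {-pi..pi} (\<lambda>x. f x * V x)"
    using pairing_sums[OF summ sums Vc] by (simp add: psi)
  have psik: "\<psi> k = 2*pi" if "k \<le> L" for k
  proof -
    have "real (2*L - k) - real (L - k) = real L" using that by (simp add: of_nat_diff)
    then have "2*pi*real (2*L - k) - 2*pi*real (L - k) = 2*pi*real L" by (simp add: algebra_simps)
    then show ?thesis unfolding \<psi>_def using L1 by simp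
  qed
  have iV: "integral {-pi..pi} V = 2*pi" using psi[of 0] psik[of 0] by simp
  have T0: "T 0 = a 0 + (\<Sum>k=1..n. a k)" using Tdef[of 0] by simp
  have eqh: "integral {-pi..pi} (\<lambda>x. (f x - T x) * V x) = integral {-pi..pi} (\<lambda>x. f x * V x) - 2*pi*T 0"
  proof -
    have "(\<Sum>k=1..n. a k * integral {-pi..pi} (\<lambda>x. cos (real k * x) * V x)) = (\<Sum>k=1..n. a k * (2*pi))"
      by (rule sum.cong) (auto simp: L_def psik psi)
    also have "\<dots> = 2*pi*(\<Sum>k=1..n. a k)" by (simp add: sum_distrib_left sum_distrib_right mult.commute)
    finally have e: "(\<Sum>k=1..n. a k * integral {-pi..pi} (\<lambda>x. cos (real k * x) * V x)) = 2*pi*(\<Sum>k=1..n. a k)" .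
    show ?thesis unfolding pair_h[OF Vc Ve] e iV T0 by (simp add: algebra_simps)
  qed
  have ub: "\<bar>integral {-pi..pi} (\<lambda>x. (f x - T x) * V x)\<bar> \<le> s * integral {-pi..pi} (\<lambda>x. (1 / real L) * (Gk (2*L) x + Gk L x))"
  proof (rule h_bound)
    show "continuous_on {-pi..pi} (\<lambda>x. f x - T x)" by (intro continuous_intros fc' Tc)
    show "continuous_on {-pi..pi} V" by (rule Vc)
    show "continuous_on {-pi..pi} (\<lambda>x. (1 / real L) * (Gk (2*L) x + Gk L x))" by (intro continuous_intros Gk_cont)
    show "\<bar>f x - T x\<bar> \<le> s" for x by (rule sb)
    show "\<bar>V x\<bar> \<le> (1 / real L) * (Gk (2*L) x + Gk L x)" for x
      unfolding V_def using Gk_nonneg[of "2*L" x] Gk_nonneg[of L x] L1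
      by (simp add: abs_mult divide_right_mono)
  qed
  have iP: "integral {-pi..pi} (\<lambda>x. (1 / real L) * (Gk (2*L) x + Gk L x)) = 6*pi"
  proof -
    have "((\<lambda>x. (1 / real L) * (Gk (2*L) x + Gk L x)) has_integral (1 / real L) * (2*pi*real (2*L) + 2*pi*real L)) {-pi..pi}"
      using has_integral_mult_right[OF has_integral_add[OF Gk_integral[of 0 "2*L"] Gk_integral[of 0 L]], of "1 / real L"]
      by simp
    moreover have "(1 / real L) * (2*pi*real (2*L) + 2*pi*real L) = 6*pi" using L1 by (simp add: field_simps)
    ultimately show ?thesis by (metis integral_unique)
  qed
  have s0: "0 \<le> s" using sb[of 0] by linarith
  have c0: "(\<lambda>m. c m) sums f 0" using sums[rule_format, of 0] by simp
  have Q: "(\<lambda>m. c m * (2*pi - \<psi> m)) sums (2*pi*f 0 - integral {-pi..pi} (\<lambda>x. f x * V x))"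
  proof -
    have "(\<lambda>m. 2*pi * c m - c m * \<psi> m) sums (2*pi*f 0 - integral {-pi..pi} (\<lambda>x. f x * V x))"
      by (intro sums_diff sums_mult c0 S)
    then show ?thesis by (simp add: algebra_simps)
  qed
  have Qb: "2*pi*f 0 - integral {-pi..pi} (\<lambda>x. f x * V x) \<le> 8*pi * s"
  proof -
    have "2*pi*f 0 - integral {-pi..pi} (\<lambda>x. f x * V x) = 2*pi*(f 0 - T 0) - integral {-pi..pi} (\<lambda>x. (f x - T x) * V x)"
      using eqh by (simp add: algebra_simps)
    also have "\<dots> \<le> 2*pi * s + s * (6*pi)"
      using ub iP sb[of 0] by (smt (verit, ccfv_SIG) mult_left_mono pi_gt_zero)
    finally show ?thesis by simp
  qed
  have summc: "summable c" using summ summable_rabs_cancel by blast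
  have summt: "summable (\<lambda>m. if 2*n+1 < m then c m else 0)"
    by (rule summable_comparison_test[OF _ summ]) auto
  have "suminf (\<lambda>m. (2*pi) * (if 2*n+1 < m then c m else 0)) \<le> suminf (\<lambda>m. c m * (2*pi - \<psi> m))"
  proof (rule suminf_le)
    fix m
    have p1: "\<psi> m \<le> 2*pi"
    proof -
      have "real (2*L - m) \<le> real L + real (L - m)" by simp
      then have "2*pi*real (2*L - m) \<le> 2*pi*(real L + real (L - m))" by (intro mult_left_mono) auto
      then have "2*pi*real (2*L - m) - 2*pi*real (L - m) \<le> 2*pi*real L" by (simp add: algebra_simps)
      then show ?thesis unfolding \<psi>_def using L1 by (simp add: field_simps)
    qed
    show "(2*pi) * (if 2*n+1 < m then c m else 0) \<le> c m * (2*pi - \<psi> m)"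
    proof (cases "2*n+1 < m")
      case True
      then have "\<psi> m = 0" unfolding \<psi>_def L_def by simp
      then show ?thesis using True by simp
    next
      case False
      show ?thesis
      proof (cases "m = 0")
        case True then show ?thesis using psik[of 0] by simp
      next
        case m0: False
        then show ?thesis using False cnn[of m] p1 by simp
      qed
    qed
  next
    show "summable (\<lambda>m. (2*pi) * (if 2*n+1 < m then c m else 0))" by (intro summable_mult summt)
    show "summable (\<lambda>m. c m * (2*pi - \<psi> m))" using Q by (simp add: sums_iff)
  qed
  then have A: "2*pi * suminf (\<lambda>m. if 2*n+1 < m then c m else 0) \<le> 2*pi*f 0 - integral {-pi..pi} (\<lambda>x. f x * V x)"
    using Q summt by (simp add: sums_iff suminf_mult)
  have "2*pi * suminf (\<lambda>m. if 2*n+1 < m then c m else 0) \<le> 2*pi * (4 * s)"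
  proof -
    have "2*pi*(4 * s) = 8*pi * s" by simp
    then show ?thesis using A Qb by linarith
  qed
  then show ?thesis by (simp add: pi_gt_zero mult_le_cancel_left)
qed

lemma claim1:
  fixes K :: real and k :: nat
  assumes K0: "K > 0"
    and pt: "\<And>m M. 1 \<le> m \<Longrightarrow> m \<le> M \<Longrightarrow> M \<le> 2*m \<Longrightarrow> c M \<le> (K+1) * (c m + c (2*m))"
    and k: "1 \<le> k" "k \<le> n"
  shows "real k * c (n+k) \<le> 24*(K+1) * s"
proof -
  define q where "q = (k+1) div 3"
  define p where "p = n + q + 1"
  define M where "M = n + k"
  have q3: "3*q \<le> k+1" "k \<le> 3*q + 1" unfolding q_def by presburger+
  have pM: "p \<le> M" using q3 k unfolding p_def M_def by linarith
  have s0: "0 \<le> s" using sb[of 0] by linarith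
  have each: "c M \<le> (K+1) * (c m + c (2*m))" if "m \<in> {p..M}" for m
    using that k q3 by (intro pt) (auto simp: p_def M_def)
  have "(\<Sum>m=p..M. c M) \<le> (\<Sum>m=p..M. (K+1) * (c m + c (2*m)))"
    by (rule sum_mono) (rule each)
  also have "\<dots> = (K+1) * ((\<Sum>m=p..M. c m) + (\<Sum>m=p..M. c (2*m)))"
    by (simp add: sum_distrib_left sum.distrib distrib_left)
  also have "\<dots> \<le> (K+1) * (4 * s + 4 * s)"
  proof (rule mult_left_mono)
    have w1: "(\<Sum>m=p..M. c m) \<le> 4 * s"
    proof -
      have "(\<Sum>m=p..M. c m) \<le> (\<Sum>m=p..p+2*q. c m)"
        by (rule sum_mono2) (use q3 cnn in \<open>auto simp: p_def M_def\<close>)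
      also have "\<dots> \<le> 4 * s" by (rule window) (simp add: p_def)
      finally show ?thesis .
    qed
    have w2: "(\<Sum>m=p..M. c (2*m)) \<le> 4 * s"
    proof -
      have "(\<Sum>m=p..M. c (2*m)) = (\<Sum>j\<in>(\<lambda>m. 2*m) ` {p..M}. c j)"
        by (subst sum.reindex) (auto simp: inj_on_def)
      also have "\<dots> \<le> (\<Sum>j=2*p..2*p+2*(M-p). c j)"
        by (rule sum_mono2) (use pM cnn in \<open>auto simp: p_def\<close>)
      also have "\<dots> \<le> 4 * s" by (rule window) (use k q3 in \<open>simp add: p_def M_def\<close>)
      finally show ?thesis .
    qed
    show "(\<Sum>m=p..M. c m) + (\<Sum>m=p..M. c (2*m)) \<le> 4 * s + 4 * s" using w1 w2 by simp
  qed (use K0 in simp)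
  finally have A: "real (M + 1 - p) * c M \<le> (K+1) * (8 * s)" by simp
  have B: "real k \<le> 3 * real (M + 1 - p)" using q3 k unfolding p_def M_def by simp
  have cM: "0 \<le> c M" using cnn[of M] k unfolding M_def by simp
  have "real k * c M \<le> 3 * real (M + 1 - p) * c M" using B cM by (simp add: mult_right_mono)
  also have "\<dots> = 3 * (real (M + 1 - p) * c M)" by simp
  also have "\<dots> \<le> 3 * ((K+1) * (8 * s))" using A by linarith
  finally show ?thesis unfolding M_def by (simp add: algebra_simps)
qed

end

lemma nbvs_pt:
  fixes c :: "nat \<Rightarrow> real" and K :: real
  assumes K0: "K > 0"
    and cnn: "\<And>m. 1 \<le> m \<Longrightarrow> 0 \<le> c m"
    and var: "\<And>m. 1 \<le> m \<Longrightarrow> (\<Sum>i=m..2*m. \<bar>c i - c (Suc i)\<bar>) \<le> K * (\<bar>c m\<bar> + \<bar>c (2*m)\<bar>)"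
    and m: "1 \<le> m" "m \<le> M" "M \<le> 2*m"
  shows "c M \<le> (K+1) * (c m + c (2*m))"
proof -
  have "c M - c m = (\<Sum>i=m..<M. c (Suc i) - c i)" using m by (simp add: sum_Suc_diff')
  also have "\<dots> \<le> (\<Sum>i=m..<M. \<bar>c i - c (Suc i)\<bar>)" by (rule sum_mono) auto
  also have "\<dots> \<le> (\<Sum>i=m..2*m. \<bar>c i - c (Suc i)\<bar>)" by (rule sum_mono2) (use m in auto)
  also have "\<dots> \<le> K * (c m + c (2*m))" using var[OF m(1)] cnn[of m] cnn[of "2*m"] m by simp
  finally have "c M \<le> c m + K * (c m + c (2*m))" by simp
  also have "\<dots> \<le> (K+1) * (c m + c (2*m))" using cnn[of m] cnn[of "2*m"] m by (simp add: algebra_simps)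
  finally show ?thesis .
qed




lemma mcos: "\<bar>x * cos y\<bar> \<le> \<bar>x::real\<bar>"
proof -
  have "\<bar>x\<bar> * \<bar>cos y\<bar> \<le> \<bar>x\<bar> * 1" by (intro mult_left_mono) auto
  then show ?thesis by (simp add: abs_mult)
qed

lemma msin: "\<bar>x * sin y\<bar> \<le> \<bar>x::real\<bar>"
proof -
  have "\<bar>x\<bar> * \<bar>sin y\<bar> \<le> \<bar>x\<bar> * 1" by (intro mult_left_mono) auto
  then show ?thesis by (simp add: abs_mult)
qed

lemma tail_split:
  fixes c :: "nat \<Rightarrow> real"
  assumes summ: "summable (\<lambda>m. \<bar>c m\<bar>)"
  shows "suminf (\<lambda>m. if n < m then c m else 0) =
    (\<Sum>m=n+1..2*n. c m) + c (2*n+1) + suminf (\<lambda>m. if 2*n+1 < m then c m else 0)"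
proof -
  have summt: "summable (\<lambda>m. if 2*n+1 < m then c m else 0)"
    by (rule summable_comparison_test[OF _ summ]) auto
  have "(\<lambda>m. (if m \<in> {n+1..2*n+1} then c m else 0) + (if 2*n+1 < m then c m else 0)) sums
     ((\<Sum>m\<in>{n+1..2*n+1}. c m) + suminf (\<lambda>m. if 2*n+1 < m then c m else 0))"
    by (intro sums_add sums_If_finite_set summable_sums summt) auto
  moreover have "(\<lambda>m. (if m \<in> {n+1..2*n+1} then c m else 0) + (if 2*n+1 < m then c m else 0)) =
      (\<lambda>m. if n < m then c m else 0)" by (rule ext) auto
  moreover have "(\<Sum>m\<in>{n+1..2*n+1}. c m) = (\<Sum>m=n+1..2*n. c m) + c (2*n+1)"
    using sum.cl_ivl_Suc[of c "n+1" "2*n"] by simp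
  ultimately show ?thesis by (simp add: sums_iff)
qed

lemma partial_bound:
  fixes c :: "nat \<Rightarrow> real"
  assumes summ: "summable (\<lambda>m. \<bar>c m\<bar>)" and cnn: "\<And>m. 1 \<le> m \<Longrightarrow> 0 \<le> c m"
    and sums: "(\<lambda>m. c m * cos (real m * x)) sums F"
  shows "\<bar>F - (\<Sum>k=0..n. c k * cos (real k * x))\<bar> \<le> suminf (\<lambda>m. if n < m then c m else 0)"
proof -
  define g where "g = (\<lambda>m. if n < m then c m * cos (real m * x) else 0)"
  have "(\<lambda>m. c m * cos (real m * x) - (if m \<in> {0..n} then c m * cos (real m * x) else 0)) sums
     (F - (\<Sum>k\<in>{0..n}. c k * cos (real k * x)))"
    by (intro sums_diff sums sums_If_finite_set) auto
  moreover have "(\<lambda>m. c m * cos (real m * x) - (if m \<in> {0..n} then c m * cos (real m * x) else 0)) = g"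
    unfolding g_def by (rule ext) auto
  ultimately have e: "F - (\<Sum>k=0..n. c k * cos (real k * x)) = suminf g" by (simp add: sums_iff)
  have gb: "\<bar>g m\<bar> \<le> (if n < m then c m else 0)" for m
  proof (cases "n < m")
    case True
    then have "0 \<le> c m" using cnn[of m] by simp
    then show ?thesis using True mcos[of "c m" "real m * x"] unfolding g_def by simp
  qed (simp add: g_def)
  have summt: "summable (\<lambda>m. if n < m then c m else 0)"
    by (rule summable_comparison_test[OF _ summ]) auto
  have sg: "summable (\<lambda>m. \<bar>g m\<bar>)"
    by (rule summable_comparison_test[OF _ summt]) (use gb in auto)
  have "\<bar>suminf g\<bar> \<le> suminf (\<lambda>m. \<bar>g m\<bar>)" by (rule summable_rabs[OF sg])
  also have "\<dots> \<le> suminf (\<lambda>m. if n < m then c m else 0)"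
    by (rule suminf_le[OF gb sg summt])
  finally show ?thesis using e by simp
qed

lemma sup_norm_upper:
  assumes "\<And>x. \<bar>g x\<bar> \<le> B"
  shows "\<bar>g x\<bar> \<le> sup_norm g"
  unfolding sup_norm_def
  by (rule cSUP_upper) (use assms in \<open>auto intro!: bdd_aboveI2[where M=B]\<close>)

lemma sup_norm_least:
  assumes "\<And>x. \<bar>g x\<bar> \<le> B"
  shows "sup_norm g \<le> B"
  unfolding sup_norm_def
  by (rule cSUP_least) (use assms in auto)

theorem corollary1:
  fixes c :: "nat \<Rightarrow> real" and f :: "real \<Rightarrow> real"
  assumes "NBVS (\<lambda>n. complex_of_real (c n))"
    and "\<forall>x. (\<lambda>n. c n * cos (real n * x)) sums f x"
    and "continuous_on UNIV f"
    and "(\<lambda>n. \<Sum>k=n+1..2*n. c k) \<in> O(\<lambda>n. Max {real k * c (n + k) | k. 1 \<le> k \<and> k \<le> n})"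
  shows "(\<lambda>n. sup_norm (\<lambda>x. f x - (\<Sum>k=0..n. c k * cos (real k * x))))
           \<in> O(\<lambda>n. best_approx n f)"
proof -
  note sums = assms(2)
  note fc = assms(3)
  obtain \<theta>0 where th: "\<theta>0 < pi/2" "\<forall>n\<ge>1. complex_of_real (c n) \<in> sector \<theta>0"
    using assms(1) unfolding NBVS_def by blast
  obtain K where K0: "K > 0" and varc: "\<forall>m\<ge>1. (\<Sum>n=m..2*m. norm (complex_of_real (c n) - complex_of_real (c (Suc n))))
      \<le> K * (norm (complex_of_real (c m)) + norm (complex_of_real (c (2*m))))"
    using assms(1) unfolding NBVS_def by blast
  have cnn: "0 \<le> c m" if "1 \<le> m" for m
  proof (rule ccontr)
    assume "\<not> 0 \<le> c m"
    then have "c m < 0" by simp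
    moreover have "complex_of_real (c m) \<in> sector \<theta>0" using th that by auto
    ultimately have "\<bar>pi\<bar> \<le> \<theta>0" unfolding sector_def by auto
    then show False using th(1) pi_gt_zero by linarith
  qed
  have var: "(\<Sum>i=m..2*m. \<bar>c i - c (Suc i)\<bar>) \<le> K * (\<bar>c m\<bar> + \<bar>c (2*m)\<bar>)" if "1 \<le> m" for m
  proof -
    have "\<And>x y. norm (complex_of_real x - complex_of_real y) = \<bar>x - y\<bar>"
      by (metis norm_of_real of_real_diff)
    then show ?thesis using varc that by simp
  qed
  have pt: "c M \<le> (K+1) * (c m + c (2*m))" if "1 \<le> m" "m \<le> M" "M \<le> 2*m" for m M
    by (rule nbvs_pt[OF K0 cnn var that]) auto
  have summc: "summable c" using sums[rule_format, of 0] by (simp add: sums_iff)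
  have summ: "summable (\<lambda>m. \<bar>c m\<bar>)"
  proof -
    have "eventually (\<lambda>m. \<bar>c m\<bar> = c m) sequentially"
      using eventually_ge_at_top[of 1] by eventually_elim (simp add: cnn)
    then show ?thesis using summc by (simp add: summable_cong)
  qed
  from assms(4) obtain C where C0: "C > 0" and ev: "eventually (\<lambda>n. norm (\<Sum>k=n+1..2*n. c k)
      \<le> C * norm (Max {real k * c (n + k) | k. 1 \<le> k \<and> k \<le> n})) at_top"
    by (elim landau_o.bigE)
  define B where "B = C * (24*(K+1)) + 8"
  have B0: "B > 0" unfolding B_def using C0 K0 by (simp add: add_pos_nonneg)
  have fb: "\<bar>f x\<bar> \<le> suminf (\<lambda>m. \<bar>c m\<bar>)" for x
  proof -
    have s1: "summable (\<lambda>m. \<bar>c m * cos (real m * x)\<bar>)"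
      by (rule summable_comparison_test[OF _ summ]) (use mcos in auto)
    have "\<bar>f x\<bar> = \<bar>suminf (\<lambda>m. c m * cos (real m * x))\<bar>" using sums by (simp add: sums_iff)
    also have "\<dots> \<le> suminf (\<lambda>m. \<bar>c m * cos (real m * x)\<bar>)" by (rule summable_rabs[OF s1])
    also have "\<dots> \<le> suminf (\<lambda>m. \<bar>c m\<bar>)"
      by (rule suminf_le[OF _ s1 summ]) (rule mcos)
    finally show ?thesis .
  qed
  show ?thesis
  proof (rule bigoI[where c = B])
    show "eventually (\<lambda>n. norm (sup_norm (\<lambda>x. f x - (\<Sum>k=0..n. c k * cos (real k * x))))
        \<le> B * norm (best_approx n f)) at_top"
      using ev eventually_ge_at_top[of 1]
    proof eventually_elim
      case (elim n)
      define R where "R = suminf (\<lambda>m. if n < m then c m else 0)"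
      have supR: "sup_norm (\<lambda>x. f x - (\<Sum>k=0..n. c k * cos (real k * x))) \<le> R"
        unfolding R_def by (rule sup_norm_least) (rule partial_bound[OF summ cnn sums[rule_format]])
      have sup0: "0 \<le> sup_norm (\<lambda>x. f x - (\<Sum>k=0..n. c k * cos (real k * x)))"
        using sup_norm_upper[of "\<lambda>x. f x - (\<Sum>k=0..n. c k * cos (real k * x))" R 0]
          partial_bound[OF summ cnn sums[rule_format]] R_def by fastforce
      have key: "R \<le> B * sup_norm (\<lambda>x. f x - T x)" if tp: "trig_poly n T" for T
      proof -
        obtain a b where Ta: "\<And>x. T x = a 0 + (\<Sum>k=1..n. a k * cos (real k * x) + b k * sin (real k * x))"
          using tp unfolding trig_poly_def by blast
        define s where "s = sup_norm (\<lambda>x. f x - T x)"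
        have Tb: "\<bar>T x\<bar> \<le> \<bar>a 0\<bar> + (\<Sum>k=1..n. \<bar>a k\<bar> + \<bar>b k\<bar>)" for x
        proof -
          have "\<bar>T x\<bar> \<le> \<bar>a 0\<bar> + \<bar>\<Sum>k=1..n. a k * cos (real k * x) + b k * sin (real k * x)\<bar>"
            unfolding Ta by (rule abs_triangle_ineq)
          also have "\<bar>\<Sum>k=1..n. a k * cos (real k * x) + b k * sin (real k * x)\<bar> \<le>
              (\<Sum>k=1..n. \<bar>a k * cos (real k * x) + b k * sin (real k * x)\<bar>)" by (rule sum_abs)
          also have "\<dots> \<le> (\<Sum>k=1..n. \<bar>a k\<bar> + \<bar>b k\<bar>)"
          proof (rule sum_mono)
            fix k
            have "\<bar>a k * cos (real k * x)\<bar> \<le> \<bar>a k\<bar>" by (rule mcos)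
            moreover have "\<bar>b k * sin (real k * x)\<bar> \<le> \<bar>b k\<bar>" by (rule msin)
            ultimately show "\<bar>a k * cos (real k * x) + b k * sin (real k * x)\<bar> \<le> \<bar>a k\<bar> + \<bar>b k\<bar>"
              by linarith
          qed
          finally show ?thesis by simp
        qed
        have hb: "\<bar>f x - T x\<bar> \<le> suminf (\<lambda>m. \<bar>c m\<bar>) + (\<bar>a 0\<bar> + (\<Sum>k=1..n. \<bar>a k\<bar> + \<bar>b k\<bar>))" for x
          using fb[of x] Tb[of x] by linarith
        have sb: "\<bar>f x - T x\<bar> \<le> s" for x unfolding s_def by (rule sup_norm_upper[OF hb])
        note W = window[OF cnn summ sums fc Ta sb]
        note TL = tail_bound[OF cnn summ sums fc Ta sb]
        note C1 = claim1[OF cnn summ sums fc Ta sb K0 pt]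
        have A0: "0 \<le> (\<Sum>k=n+1..2*n. c k)" by (rule sum_nonneg) (simp add: cnn)
        have setq: "{real k * c (n + k) | k. 1 \<le> k \<and> k \<le> n} = (\<lambda>k. real k * c (n + k)) ` {1..n}"
          by auto
        have Mx: "Max {real k * c (n + k) | k. 1 \<le> k \<and> k \<le> n} \<le> 24*(K+1) * s"
          unfolding setq using elim(2) C1 by (subst Max_le_iff) auto
        have M0: "0 \<le> Max {real k * c (n + k) | k. 1 \<le> k \<and> k \<le> n}"
        proof -
          have "real 1 * c (n + 1) \<le> Max {real k * c (n + k) | k. 1 \<le> k \<and> k \<le> n}"
            unfolding setq
          proof (rule Max_ge)
            show "finite ((\<lambda>k. real k * c (n + k)) ` {1..n})" by simp
            show "real 1 * c (n + 1) \<in> (\<lambda>k. real k * c (n + k)) ` {1..n}"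
              using elim(2) by (intro imageI) auto
          qed
          then show ?thesis using cnn[of "n+1"] by simp
        qed
        have "(\<Sum>k=n+1..2*n. c k) \<le> C * (24*(K+1) * s)"
        proof -
          have "(\<Sum>k=n+1..2*n. c k) \<le> C * Max {real k * c (n + k) | k. 1 \<le> k \<and> k \<le> n}"
            using elim(1) A0 M0 by simp
          also have "\<dots> \<le> C * (24*(K+1) * s)" using Mx C0 by (simp add: mult_left_mono)
          finally show ?thesis .
        qed
        moreover have "c (2*n+1) \<le> 4 * s" using W[of 0 "2*n+1"] by simp
        moreover have "R = (\<Sum>m=n+1..2*n. c m) + c (2*n+1) + suminf (\<lambda>m. if 2*n+1 < m then c m else 0)"
          unfolding R_def by (rule tail_split[OF summ])
        ultimately have "R \<le> C * (24*(K+1) * s) + 4 * s + 4 * s" using TL by linarith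
        also have "\<dots> = B * s" unfolding B_def by (simp add: algebra_simps)
        finally show ?thesis unfolding s_def .
      qed
      have ne: "{T. trig_poly n T} \<noteq> {}"
      proof -
        have "trig_poly n (\<lambda>x. 0)" unfolding trig_poly_def by (rule exI[of _ "\<lambda>_. 0"])+ simp
        then show ?thesis by blast
      qed
      have "R / B \<le> best_approx n f"
        unfolding best_approx_def
      proof (rule cINF_greatest[OF ne])
        fix T assume "T \<in> {T. trig_poly n T}"
        then show "R / B \<le> sup_norm (\<lambda>x. f x - T x)" using key B0 by (simp add: divide_le_eq mult.commute)
      qed
      then have "R \<le> B * best_approx n f" using B0 by (simp add: divide_le_eq mult.commute)
      moreover have "0 \<le> best_approx n f"
      proof -
        have "0 \<le> R" using sup0 supR by linarith
        then have "0 \<le> R / B" using B0 by simp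
        then show ?thesis using \<open>R / B \<le> best_approx n f\<close> by linarith
      qed
      ultimately show ?case using supR sup0 by simp
    qed
  qed
qed

end
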